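(* Let $(M_1,f_1,g_1)$ be an $(m,n)$-hypermodule over a commutative Krasner $(m,n)$-hyperring $(R_1,f'_1,g'_1)$ and $(M_2,f_2,g_2)$ an $(m,n)$-hypermodule over a commutative Krasner $(m,n)$-hyperring $(R_2,f'_2,g'_2)$, both with scalar identity $1$, and consider the $(m,n)$-hypermodule $(M_1\times M_2,f_1\times f_2,g_1\times g_2)$ over $(R_1\times R_2,f'_1\times f'_2,g'_1\times g'_2)$. Let $\phi:\mathcal{SH}(M_1\times M_2)\to\mathcal{SH}(M_1\times M_2)\cup\{\varnothing\}$ be a function. If $Q_1$ is an $n$-ary weakly classical prime subhypermodule of $M_1$ with $\{0\}\times M_2\subseteq\phi(Q_1\times M_2)$, then $Q_1\times M_2$ is an $n$-ary $\phi$-classical prime subhypermodule of $M_1\times M_2$.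
   Context: A commutative Krasner $(m,n)$-hyperring with scalar identity $1$ is a triple $(R,f',g')$ where $(R,f')$ is a canonical $m$-ary hypergroup with zero $0$, $(R,g')$ is a commutative $n$-ary semigroup, $g'$ is distributive over $f'$, $0$ is a zero element for $g'$, and $g'(x,1^{(n-1)})=x$. Notation: $x_i^j$ denotes $x_i,\dots,x_j$ and $x^{(k)}$ denotes $x$ repeated $k$ times. An $(m,n)$-hypermodule over $R$ is a triple $(M,f,g)$ with $(M,f)$ a canonical $m$-ary hypergroup with zero $0$ and $g:R^{n-1}\times M\to P^*(M)$ satisfying: $g(r_1^{n-1},f(x_1^m))=f(g(r_1^{n-1},x_1),\dots,g(r_1^{n-1},x_m))$; $g(r_1^{i-1},f'(s_1^m),r_{i+1}^{n-1},x)=f(g(r_1^{i-1},s_1,r_{i+1}^{n-1},x),\dots,g(r_1^{i-1},s_m,r_{i+1}^{n-1},x))$; $g(r_1^{i-1},g'(r_i^{i+n-1}),r_{i+n}^{2n-2},x)=g(r_1^{n-1},g(r_n^{2n-2},x))$; $g(r_1^{i-1},0,r_{i+1}^{n-1},x)=\{0\}$; moreover $g(1^{(n-1)},a)=\{a\}$. A subhypermodule is a nonempty $N\subseteq M$ with $(N,f)$ an $m$-ary subhypergroup and $g(R^{(n-1)},N)\subseteq N$; $\mathcal{SH}(M)$ is the set of subhypermodules. The product hyperring has componentwise operations, with identity $(1,1)$. On $M_1\times M_2$: $f_1\times f_2((a_1,b_1),\dots,(a_m,b_m))=\{(x_1,x_2):x_1\in f_1(a_1^m),x_2\in f_2(b_1^m)\}$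 and $g_1\times g_2((r_1,s_1),\dots,(r_{n-1},s_{n-1}),(a,b))=\{(y_1,y_2):y_1\in g_1(r_1^{n-1},a),y_2\in g_2(s_1^{n-1},b)\}$. A proper subhypermodule $Q$ of $M$ is $n$-ary weakly classical prime if $0\notin g(r_1^{n-1},a)\subseteq Q$ implies $g(r_i,1^{(n-2)},a)\subseteq Q$ for some $1\le i\le n-1$; given $\phi$ on subhypermodules, $Q$ is $n$-ary $\phi$-classical prime if $g(r_1^{n-1},a)\subseteq Q\setminus\phi(Q)$ implies $g(r_i,1^{(n-2)},a)\subseteq Q$ for some $i$ (applied to $M_1\times M_2$ with its operations and identity $(1,1)$). *)

theory Defs
  imports Main "HOL-Library.Multiset"
begin

text \<open>An m-ary hyperoperation is modelled as a function on argument lists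
  (only lists of length m over the carrier are relevant); an n-ary operation
  likewise with a single value.  Indices are 0-based.\<close>

definition lift_hop :: "('a list \<Rightarrow> 'a set) \<Rightarrow> 'a set list \<Rightarrow> 'a set" where
  "lift_hop f As = \<Union> (f ` listset As)"

definition hyperop :: "'a set \<Rightarrow> nat \<Rightarrow> ('a list \<Rightarrow> 'a set) \<Rightarrow> bool" where
  "hyperop H k f \<longleftrightarrow> (\<forall>xs\<in>lists H. length xs = k \<longrightarrow> f xs \<noteq> {} \<and> f xs \<subseteq> H)"

definition hassoc :: "'a set \<Rightarrow> nat \<Rightarrow> ('a list \<Rightarrow> 'a set) \<Rightarrow> bool" where
  "hassoc H k f \<longleftrightarrow> (\<forall>xs\<in>lists H. length xs = 2*k - 1 \<longrightarrow> (\<forall>i<k.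
     lift_hop f (map (\<lambda>x. {x}) (take i xs) @ [f (take k (drop i xs))] @ map (\<lambda>x. {x}) (drop (i+k) xs))
   = lift_hop f (f (take k xs) # map (\<lambda>x. {x}) (drop k xs))))"

definition hcomm :: "'a set \<Rightarrow> nat \<Rightarrow> ('a list \<Rightarrow> 'b) \<Rightarrow> bool" where
  "hcomm H k f \<longleftrightarrow> (\<forall>xs\<in>lists H. \<forall>ys. length xs = k \<and> mset ys = mset xs \<longrightarrow> f ys = f xs)"

definition hinv :: "'a set \<Rightarrow> nat \<Rightarrow> ('a list \<Rightarrow> 'a set) \<Rightarrow> 'a \<Rightarrow> 'a \<Rightarrow> 'a" where
  "hinv H m f z x = (THE y. y \<in> H \<and> z \<in> f (x # y # replicate (m - 2) z))"

definition canonical_hypergroup :: "'a set \<Rightarrow> nat \<Rightarrow> ('a list \<Rightarrow> 'a set) \<Rightarrow> 'a \<Rightarrow> bool" where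
  "canonical_hypergroup H m f z \<longleftrightarrow>
     hyperop H m f \<and> hassoc H m f \<and> hcomm H m f \<and>
     (\<forall>xs\<in>lists H. length xs = m \<longrightarrow> (\<forall>i<m. (\<Union>y\<in>H. f (xs[i := y])) = H)) \<and>
     z \<in> H \<and> (\<forall>x\<in>H. f (x # replicate (m - 1) z) = {x}) \<and>
     (\<forall>e\<in>H. (\<forall>x\<in>H. f (x # replicate (m - 1) e) = {x}) \<longrightarrow> e = z) \<and>
     (\<forall>x\<in>H. \<exists>!y. y \<in> H \<and> z \<in> f (x # y # replicate (m - 2) z)) \<and>
     (\<forall>xs\<in>lists H. length xs = m \<longrightarrow>
        (\<forall>x\<in>f xs. \<forall>i<m. xs ! i \<in> f ((map (hinv H m f z) xs)[i := x])))"

definition sassoc :: "'a set \<Rightarrow> nat \<Rightarrow> ('a list \<Rightarrow> 'a) \<Rightarrow> bool" where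
  "sassoc H k g \<longleftrightarrow> (\<forall>xs\<in>lists H. length xs = 2*k - 1 \<longrightarrow> (\<forall>i<k.
     g (take i xs @ [g (take k (drop i xs))] @ drop (i+k) xs) = g (g (take k xs) # drop k xs)))"

definition comm_nsemigroup :: "'a set \<Rightarrow> nat \<Rightarrow> ('a list \<Rightarrow> 'a) \<Rightarrow> bool" where
  "comm_nsemigroup H k g \<longleftrightarrow>
     (\<forall>xs\<in>lists H. length xs = k \<longrightarrow> g xs \<in> H) \<and> sassoc H k g \<and> hcomm H k g"

definition krasner_hyperring ::
  "'a set \<Rightarrow> nat \<Rightarrow> nat \<Rightarrow> ('a list \<Rightarrow> 'a set) \<Rightarrow> ('a list \<Rightarrow> 'a) \<Rightarrow> 'a \<Rightarrow> 'a \<Rightarrow> bool" where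
  "krasner_hyperring R m n fR gR z one \<longleftrightarrow>
     canonical_hypergroup R m fR z \<and> comm_nsemigroup R n gR \<and>
     (\<forall>xs\<in>lists R. length xs = n \<longrightarrow> (\<forall>ys\<in>lists R. length ys = m \<longrightarrow> (\<forall>i<n.
        (\<lambda>t. gR (xs[i := t])) ` fR ys = fR (map (\<lambda>y. gR (xs[i := y])) ys)))) \<and>
     (\<forall>xs\<in>lists R. length xs = n \<longrightarrow> (\<forall>i<n. gR (xs[i := z]) = z)) \<and>
     one \<in> R \<and> (\<forall>x\<in>R. gR (x # replicate (n - 1) one) = x)"

definition hypermodule ::
  "'r set \<Rightarrow> nat \<Rightarrow> nat \<Rightarrow> ('r list \<Rightarrow> 'r set) \<Rightarrow> ('r list \<Rightarrow> 'r) \<Rightarrow> 'r \<Rightarrow> 'r \<Rightarrow>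
   'm set \<Rightarrow> ('m list \<Rightarrow> 'm set) \<Rightarrow> ('r list \<Rightarrow> 'm \<Rightarrow> 'm set) \<Rightarrow> 'm \<Rightarrow> bool" where
  "hypermodule R m n fR gR zR oneR M f g zM \<longleftrightarrow>
     canonical_hypergroup M m f zM \<and>
     (\<forall>rs\<in>lists R. length rs = n - 1 \<longrightarrow> (\<forall>x\<in>M. g rs x \<noteq> {} \<and> g rs x \<subseteq> M)) \<and>
     (\<forall>rs\<in>lists R. length rs = n - 1 \<longrightarrow> (\<forall>xs\<in>lists M. length xs = m \<longrightarrow>
        (\<Union>y\<in>f xs. g rs y) = lift_hop f (map (g rs) xs))) \<and>
     (\<forall>rs\<in>lists R. length rs = n - 1 \<longrightarrow> (\<forall>ss\<in>lists R. length ss = m \<longrightarrow>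
        (\<forall>i<n-1. \<forall>x\<in>M. (\<Union>t\<in>fR ss. g (rs[i := t]) x) = lift_hop f (map (\<lambda>s. g (rs[i := s]) x) ss)))) \<and>
     (\<forall>rs\<in>lists R. length rs = 2*n - 2 \<longrightarrow> (\<forall>i<n-1. \<forall>x\<in>M.
        g (take i rs @ [gR (take n (drop i rs))] @ drop (i+n) rs) x
        = (\<Union>y\<in>g (drop (n-1) rs) x. g (take (n-1) rs) y))) \<and>
     (\<forall>rs\<in>lists R. length rs = n - 1 \<longrightarrow> (\<forall>i<n-1. \<forall>x\<in>M. g (rs[i := zR]) x = {zM})) \<and>
     (\<forall>a\<in>M. g (replicate (n - 1) oneR) a = {a})"

definition subhypermodule ::
  "'r set \<Rightarrow> nat \<Rightarrow> nat \<Rightarrow> 'm set \<Rightarrow> ('m list \<Rightarrow> 'm set) \<Rightarrow> ('r list \<Rightarrow> 'm \<Rightarrow> 'm set) \<Rightarrow> 'm set \<Rightarrow> bool" where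
  "subhypermodule R m n M f g N \<longleftrightarrow>
     N \<noteq> {} \<and> N \<subseteq> M \<and>
     (\<forall>xs\<in>lists N. length xs = m \<longrightarrow> f xs \<subseteq> N) \<and>
     (\<forall>xs\<in>lists N. length xs = m \<longrightarrow> (\<forall>i<m. (\<Union>y\<in>N. f (xs[i := y])) = N)) \<and>
     (\<forall>rs\<in>lists R. length rs = n - 1 \<longrightarrow> (\<forall>x\<in>N. g rs x \<subseteq> N))"

definition weakly_classical_prime ::
  "'r set \<Rightarrow> nat \<Rightarrow> nat \<Rightarrow> 'm set \<Rightarrow> ('m list \<Rightarrow> 'm set) \<Rightarrow> ('r list \<Rightarrow> 'm \<Rightarrow> 'm set) \<Rightarrow> 'm \<Rightarrow> 'r \<Rightarrow> 'm set \<Rightarrow> bool" where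
  "weakly_classical_prime R m n M f g zM oneR Q \<longleftrightarrow>
     subhypermodule R m n M f g Q \<and> Q \<noteq> M \<and>
     (\<forall>rs\<in>lists R. length rs = n - 1 \<longrightarrow> (\<forall>a\<in>M.
        zM \<notin> g rs a \<and> g rs a \<subseteq> Q \<longrightarrow> (\<exists>i<n-1. g (rs ! i # replicate (n - 2) oneR) a \<subseteq> Q)))"

definition phi_classical_prime ::
  "'r set \<Rightarrow> nat \<Rightarrow> nat \<Rightarrow> 'm set \<Rightarrow> ('m list \<Rightarrow> 'm set) \<Rightarrow> ('r list \<Rightarrow> 'm \<Rightarrow> 'm set) \<Rightarrow> 'r \<Rightarrow> ('m set \<Rightarrow> 'm set) \<Rightarrow> 'm set \<Rightarrow> bool" where
  "phi_classical_prime R m n M f g oneR \<phi> Q \<longleftrightarrow>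
     subhypermodule R m n M f g Q \<and> Q \<noteq> M \<and>
     (\<forall>rs\<in>lists R. length rs = n - 1 \<longrightarrow> (\<forall>a\<in>M.
        g rs a \<subseteq> Q - \<phi> Q \<longrightarrow> (\<exists>i<n-1. g (rs ! i # replicate (n - 2) oneR) a \<subseteq> Q)))"

definition prod_hop :: "('a list \<Rightarrow> 'a set) \<Rightarrow> ('b list \<Rightarrow> 'b set) \<Rightarrow> ('a \<times> 'b) list \<Rightarrow> ('a \<times> 'b) set" where
  "prod_hop f1 f2 xs = f1 (map fst xs) \<times> f2 (map snd xs)"

definition prod_op :: "('a list \<Rightarrow> 'a) \<Rightarrow> ('b list \<Rightarrow> 'b) \<Rightarrow> ('a \<times> 'b) list \<Rightarrow> 'a \<times> 'b" where
  "prod_op g1 g2 xs = (g1 (map fst xs), g2 (map snd xs))"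

definition prod_smul :: "('r list \<Rightarrow> 'a \<Rightarrow> 'a set) \<Rightarrow> ('s list \<Rightarrow> 'b \<Rightarrow> 'b set) \<Rightarrow>
    ('r \<times> 's) list \<Rightarrow> 'a \<times> 'b \<Rightarrow> ('a \<times> 'b) set" where
  "prod_smul g1 g2 rs x = g1 (map fst rs) (fst x) \<times> g2 (map snd rs) (snd x)"

end

theory Submission
  imports Defs
begin

theorem mainTheorem17:
  fixes R1 :: "'r1 set" and R2 :: "'r2 set" and M1 :: "'m1 set" and M2 :: "'m2 set"
    and m n :: nat
    and fR1 :: "'r1 list \<Rightarrow> 'r1 set" and gR1 :: "'r1 list \<Rightarrow> 'r1"
    and fR2 :: "'r2 list \<Rightarrow> 'r2 set" and gR2 :: "'r2 list \<Rightarrow> 'r2"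
    and f1 :: "'m1 list \<Rightarrow> 'm1 set" and g1 :: "'r1 list \<Rightarrow> 'm1 \<Rightarrow> 'm1 set"
    and f2 :: "'m2 list \<Rightarrow> 'm2 set" and g2 :: "'r2 list \<Rightarrow> 'm2 \<Rightarrow> 'm2 set"
    and zR1 oneR1 :: 'r1 and zR2 oneR2 :: 'r2 and z1 :: 'm1 and z2 :: 'm2
    and \<phi> :: "('m1 \<times> 'm2) set \<Rightarrow> ('m1 \<times> 'm2) set"
    and Q1 :: "'m1 set"
  assumes "m \<ge> 2" and "n \<ge> 2"
    and "krasner_hyperring R1 m n fR1 gR1 zR1 oneR1"
    and "krasner_hyperring R2 m n fR2 gR2 zR2 oneR2"
    and "hypermodule R1 m n fR1 gR1 zR1 oneR1 M1 f1 g1 z1"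
    and "hypermodule R2 m n fR2 gR2 zR2 oneR2 M2 f2 g2 z2"
    and "\<forall>N. subhypermodule (R1 \<times> R2) m n (M1 \<times> M2) (prod_hop f1 f2) (prod_smul g1 g2) N \<longrightarrow>
           \<phi> N = {} \<or> subhypermodule (R1 \<times> R2) m n (M1 \<times> M2) (prod_hop f1 f2) (prod_smul g1 g2) (\<phi> N)"
    and "weakly_classical_prime R1 m n M1 f1 g1 z1 oneR1 Q1"
    and "{z1} \<times> M2 \<subseteq> \<phi> (Q1 \<times> M2)"
  shows "phi_classical_prime (R1 \<times> R2) m n (M1 \<times> M2) (prod_hop f1 f2) (prod_smul g1 g2)
           (oneR1, oneR2) \<phi> (Q1 \<times> M2)"
proof -
  note wcp = assms(8)[unfolded weakly_classical_prime_def]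
  have subQ: "subhypermodule R1 m n M1 f1 g1 Q1" and QM: "Q1 \<noteq> M1"
    and pr: "\<forall>rs\<in>lists R1. length rs = n - 1 \<longrightarrow> (\<forall>a\<in>M1.
        z1 \<notin> g1 rs a \<and> g1 rs a \<subseteq> Q1 \<longrightarrow> (\<exists>i<n-1. g1 (rs ! i # replicate (n - 2) oneR1) a \<subseteq> Q1))"
    using wcp by auto
  have ch2: "canonical_hypergroup M2 m f2 z2" by (insert assms(6), unfold hypermodule_def, elim conjE, assumption)
  have z2M: "z2 \<in> M2" by (insert ch2, unfold canonical_hypergroup_def, elim conjE, assumption)
  have hop2: "hyperop M2 m f2" by (insert ch2, unfold canonical_hypergroup_def, elim conjE, assumption)
  have f2cl: "\<forall>xs\<in>lists M2. length xs = m \<longrightarrow> f2 xs \<subseteq> M2"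
    using hop2 unfolding hyperop_def by blast
  have f2rep: "\<forall>xs\<in>lists M2. length xs = m \<longrightarrow> (\<forall>i<m. (\<Union>y\<in>M2. f2 (xs[i := y])) = M2)"
    by (insert ch2, unfold canonical_hypergroup_def, elim conjE, assumption)
  have g2cl: "\<forall>rs\<in>lists R2. length rs = n - 1 \<longrightarrow> (\<forall>x\<in>M2. g2 rs x \<noteq> {} \<and> g2 rs x \<subseteq> M2)"
    by (insert assms(6), unfold hypermodule_def, elim conjE, assumption)
  have one2: "oneR2 \<in> R2" by (insert assms(4), unfold krasner_hyperring_def, elim conjE, assumption)
  have one1: "oneR1 \<in> R1" by (insert assms(3), unfold krasner_hyperring_def, elim conjE, assumption)
  have Qne: "Q1 \<noteq> {}" and QsM: "Q1 \<subseteq> M1"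
    and f1cl: "\<forall>xs\<in>lists Q1. length xs = m \<longrightarrow> f1 xs \<subseteq> Q1"
    and f1rep: "\<forall>xs\<in>lists Q1. length xs = m \<longrightarrow> (\<forall>i<m. (\<Union>y\<in>Q1. f1 (xs[i := y])) = Q1)"
    and g1cl: "\<forall>rs\<in>lists R1. length rs = n - 1 \<longrightarrow> (\<forall>x\<in>Q1. g1 rs x \<subseteq> Q1)"
    using subQ unfolding subhypermodule_def by auto
  have sub: "subhypermodule (R1 \<times> R2) m n (M1 \<times> M2) (prod_hop f1 f2) (prod_smul g1 g2) (Q1 \<times> M2)"
    unfolding subhypermodule_def
  proof (intro conjI ballI impI allI)
    show "Q1 \<times> M2 \<noteq> {}" using Qne z2M by auto
    show "Q1 \<times> M2 \<subseteq> M1 \<times> M2" using QsM by auto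
  next
    fix xs :: "('m1 \<times> 'm2) list" assume xs: "xs \<in> lists (Q1 \<times> M2)" "length xs = m"
    have a: "map fst xs \<in> lists Q1" "map snd xs \<in> lists M2" using xs(1) by fastforce+
    show "prod_hop f1 f2 xs \<subseteq> Q1 \<times> M2"
    proof -
      have "f1 (map fst xs) \<subseteq> Q1" using f1cl a(1) xs(2) by simp
      moreover have "f2 (map snd xs) \<subseteq> M2" using f2cl a(2) xs(2) by simp
      ultimately show ?thesis unfolding prod_hop_def by blast
    qed
  next
    fix xs :: "('m1 \<times> 'm2) list" and i assume xs: "xs \<in> lists (Q1 \<times> M2)" "length xs = m" and i: "i < m"
    have a: "map fst xs \<in> lists Q1" "map snd xs \<in> lists M2" using xs(1) by fastforce+
    have e1: "map fst (xs[i := y]) = (map fst xs)[i := fst y]" for y by (simp add: map_update)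
    have e2: "map snd (xs[i := y]) = (map snd xs)[i := snd y]" for y by (simp add: map_update)
    have r1: "(\<Union>y\<in>Q1. f1 ((map fst xs)[i := y])) = Q1" using f1rep a xs(2) i by simp
    have r2: "(\<Union>y\<in>M2. f2 ((map snd xs)[i := y])) = M2" using f2rep a xs(2) i by simp
    have c1: "y \<in> Q1 \<Longrightarrow> f1 ((map fst xs)[i := y]) \<subseteq> Q1" for y
    proof -
      assume y: "y \<in> Q1"
      have "set ((map fst xs)[i := y]) \<subseteq> Q1"
        using set_update_subset_insert[of "map fst xs" i y] a(1) y by (auto simp: in_lists_conv_set)
      then have "(map fst xs)[i := y] \<in> lists Q1" by (auto simp: in_lists_conv_set)
      moreover have "length ((map fst xs)[i := y]) = m" using xs(2) by simp
      ultimately show ?thesis using f1cl by blast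
    qed
    have c2: "y \<in> M2 \<Longrightarrow> f2 ((map snd xs)[i := y]) \<subseteq> M2" for y
    proof -
      assume y: "y \<in> M2"
      have "set ((map snd xs)[i := y]) \<subseteq> M2"
        using set_update_subset_insert[of "map snd xs" i y] a(2) y by (auto simp: in_lists_conv_set)
      then have "(map snd xs)[i := y] \<in> lists M2" by (auto simp: in_lists_conv_set)
      moreover have "length ((map snd xs)[i := y]) = m" using xs(2) by simp
      ultimately show ?thesis using f2cl by blast
    qed
    show "(\<Union>y\<in>Q1 \<times> M2. prod_hop f1 f2 (xs[i := y])) = Q1 \<times> M2"
    proof
      show "(\<Union>y\<in>Q1 \<times> M2. prod_hop f1 f2 (xs[i := y])) \<subseteq> Q1 \<times> M2"
        unfolding prod_hop_def e1 e2 using c1 c2 by fastforce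
    next
      show "Q1 \<times> M2 \<subseteq> (\<Union>y\<in>Q1 \<times> M2. prod_hop f1 f2 (xs[i := y]))"
      proof
        fix p assume "p \<in> Q1 \<times> M2"
        then obtain p1 p2 where p: "p = (p1, p2)" "p1 \<in> Q1" "p2 \<in> M2" by auto
        obtain y1 where y1: "y1 \<in> Q1" "p1 \<in> f1 ((map fst xs)[i := y1])" using r1 p(2) by blast
        obtain y2 where y2: "y2 \<in> M2" "p2 \<in> f2 ((map snd xs)[i := y2])" using r2 p(3) by blast
        show "p \<in> (\<Union>y\<in>Q1 \<times> M2. prod_hop f1 f2 (xs[i := y]))"
          unfolding prod_hop_def e1 e2 using y1 y2 p by force
      qed
    qed
  next
    fix rs :: "('r1 \<times> 'r2) list" and x assume rs: "rs \<in> lists (R1 \<times> R2)" "length rs = n - 1"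
      and x: "x \<in> Q1 \<times> M2"
    have a: "map fst rs \<in> lists R1" "map snd rs \<in> lists R2" using rs(1) by fastforce+
    show "prod_smul g1 g2 rs x \<subseteq> Q1 \<times> M2"
    proof -
      have x1: "fst x \<in> Q1" and x2: "snd x \<in> M2" using x by auto
      have "g1 (map fst rs) (fst x) \<subseteq> Q1" using g1cl a(1) rs(2) x1 by (metis length_map)
      moreover have "g2 (map snd rs) (snd x) \<subseteq> M2" using g2cl a(2) rs(2) x2 by (metis length_map)
      ultimately show ?thesis unfolding prod_smul_def by blast
    qed
  qed
  have ne: "Q1 \<times> M2 \<noteq> M1 \<times> M2" using QM QsM z2M by auto
  show ?thesis unfolding phi_classical_prime_def
  proof (intro conjI sub ne ballI impI allI)
    fix rs :: "('r1 \<times> 'r2) list" and a assume rs: "rs \<in> lists (R1 \<times> R2)" "length rs = n - 1"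
      and a: "a \<in> M1 \<times> M2"
      and h: "prod_smul g1 g2 rs a \<subseteq> Q1 \<times> M2 - \<phi> (Q1 \<times> M2)"
    have l: "map fst rs \<in> lists R1" "map snd rs \<in> lists R2" using rs(1) by fastforce+
    have a1: "fst a \<in> M1" and a2: "snd a \<in> M2" using a by auto
    have g2a: "g2 (map snd rs) (snd a) \<noteq> {} \<and> g2 (map snd rs) (snd a) \<subseteq> M2"
      using g2cl l(2) rs(2) a2 by (metis length_map)
    have "g2 (map snd rs) (snd a) \<noteq> {}" using g2a by blast
    then obtain b where b: "b \<in> g2 (map snd rs) (snd a)" by blast
    have "b \<in> M2" using g2a b by blast
    have s1: "g1 (map fst rs) (fst a) \<subseteq> Q1"
      using h b unfolding prod_smul_def by blast
    have s2: "z1 \<notin> g1 (map fst rs) (fst a)"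
    proof
      assume "z1 \<in> g1 (map fst rs) (fst a)"
      then have "(z1, b) \<in> prod_smul g1 g2 rs a" using b unfolding prod_smul_def by auto
      moreover have "(z1, b) \<in> \<phi> (Q1 \<times> M2)" using assms(9) \<open>b \<in> M2\<close> by auto
      ultimately show False using h by auto
    qed
    obtain i where i: "i < n - 1" "g1 (map fst rs ! i # replicate (n - 2) oneR1) (fst a) \<subseteq> Q1"
      using pr l(1) rs(2) a1 s1 s2 by (metis length_map)
    have ri: "rs ! i \<in> R1 \<times> R2" using rs i(1) by auto
    have l2: "snd (rs ! i) # replicate (n - 2) oneR2 \<in> lists R2" using ri one2 by auto
    have len2: "length (snd (rs ! i) # replicate (n - 2) oneR2) = n - 1" using assms(2) by simp
    have "g2 (snd (rs ! i) # replicate (n - 2) oneR2) (snd a) \<subseteq> M2"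
      using g2cl l2 len2 a2 by blast
    moreover have "map fst (rs ! i # replicate (n - 2) (oneR1, oneR2)) = fst (rs ! i) # replicate (n - 2) oneR1" by simp
    moreover have "map snd (rs ! i # replicate (n - 2) (oneR1, oneR2)) = snd (rs ! i) # replicate (n - 2) oneR2" by simp
    moreover have "map fst rs ! i = fst (rs ! i)" using i(1) rs(2) by simp
    ultimately show "\<exists>i<n - 1. prod_smul g1 g2 (rs ! i # replicate (n - 2) (oneR1, oneR2)) a \<subseteq> Q1 \<times> M2"
      using i unfolding prod_smul_def by (intro exI[of _ i]) auto
  qed
qed

end
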